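(* For every $k\ge0$ the sequence $\mathcal{P}_k(\delta_1)$ belongs to $\ell^1(\mathbb{N}^0,\frac1{4^n})$, $\|\mathcal{P}_0(\delta_1)\|_{1,\frac1{4^n}}=1$, and $$\|\mathcal{P}_k(\delta_1)\|_{1,\frac1{4^n}}=\mathcal{P}_k\!\left(-\tfrac14\right)=\frac{\alpha_k}{4^{k-1}},\qquad k\ge1,$$ where $\alpha_1=1$, $\alpha_2=5$ and $\alpha_k=4(\alpha_{k-1}+\alpha_{k-2})$ for $k\ge3$.
   Context: The Catalan polynomials $(\mathcal{P}_k)_{k\ge0}$ are defined by $\mathcal{P}_0(z)=\mathcal{P}_1(z)=1$ and $\mathcal{P}_{k+2}(z)=\mathcal{P}_{k+1}(z)-z\mathcal{P}_k(z)$ for $k\ge0$; equivalently $\mathcal{P}_k(z)=\frac{(1+\sqrt{1-4z})^{k+1}-(1-\sqrt{1-4z})^{k+1}}{2^{k+1}\sqrt{1-4z}}$. $\ell^1(\mathbb{N}^0,\frac1{4^n})$ is the space of complex sequences $a=(a(n))_{n\ge0}$ with norm $\|a\|_{1,\frac1{4^n}}=\sum_{n\ge0}|a(n)|/4^n<\infty$. $\delta_j$ denotes the sequence with $\delta_j(n)=1$ if $n=j$ and $0$ otherwise; for a polynomial $P(z)=\sum_{j=0}^m p_jz^j$, $P(\delta_1)=\sum_{j=0}^m p_j\delta_j$ (the sequence of its coefficients). *)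

theory Defs
  imports "HOL-Analysis.Analysis" "HOL-Computational_Algebra.Polynomial"
begin

fun catalan_poly :: "nat \<Rightarrow> complex poly" where
  "catalan_poly 0 = 1"
| "catalan_poly (Suc 0) = 1"
| "catalan_poly (Suc (Suc k)) = catalan_poly (Suc k) - [:0, 1:] * catalan_poly k"

text \<open>P(delta_1) = sum_j p_j delta_j : the coefficient sequence of P.\<close>
definition poly_at_delta1 :: "complex poly \<Rightarrow> (nat \<Rightarrow> complex)" where
  "poly_at_delta1 p = (\<lambda>n. coeff p n)"

definition in_l1_w4 :: "(nat \<Rightarrow> complex) \<Rightarrow> bool" where
  "in_l1_w4 a \<longleftrightarrow> summable (\<lambda>n. norm (a n) / 4 ^ n)"

definition norm_l1_w4 :: "(nat \<Rightarrow> complex) \<Rightarrow> real" where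
  "norm_l1_w4 a = (\<Sum>n. norm (a n) / 4 ^ n)"

fun alpha_seq :: "nat \<Rightarrow> nat" where
  "alpha_seq 0 = 0"
| "alpha_seq (Suc 0) = 1"
| "alpha_seq (Suc (Suc 0)) = 5"
| "alpha_seq (Suc (Suc (Suc k))) = 4 * (alpha_seq (Suc (Suc k)) + alpha_seq (Suc k))"

end

theory Submission
  imports Defs
begin

fun bseq :: "nat \<Rightarrow> nat \<Rightarrow> nat" where
  "bseq 0 n = (if n = 0 then 1 else 0)"
| "bseq (Suc 0) n = (if n = 0 then 1 else 0)"
| "bseq (Suc (Suc k)) n = bseq (Suc k) n + (if n = 0 then 0 else bseq k (n - 1))"

lemma coeff_cat: "coeff (catalan_poly k) n = (-1) ^ n * of_nat (bseq k n)"
proof (induction k arbitrary: n rule: catalan_poly.induct)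
  case 1 then show ?case by (simp add: coeff_1)
next
  case 2 then show ?case by (simp add: coeff_1)
next
  case (3 k)
  show ?case
  proof (cases n)
    case 0 then show ?thesis using 3 by (simp add: coeff_pCons_0)
  next
    case (Suc m)
    have "coeff ([:0, 1:] * catalan_poly k) n = coeff (catalan_poly k) m"
      using Suc by (simp add: coeff_pCons)
    then show ?thesis using 3 Suc by (simp add: algebra_simps)
  qed
qed

lemma norm_coeff: "norm (coeff (catalan_poly k) n) = real (bseq k n)"
  by (simp add: coeff_cat norm_mult norm_power)

lemma sums_cat: "(\<lambda>n. norm (poly_at_delta1 (catalan_poly k) n) / 4 ^ n) sums
   (\<Sum>n\<le>degree (catalan_poly k). norm (coeff (catalan_poly k) n) / 4 ^ n)"
  unfolding poly_at_delta1_def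
  by (rule sums_finite) (auto simp: coeff_eq_0)

lemma poly_eq: "complex_of_real (\<Sum>n\<le>degree (catalan_poly k). norm (coeff (catalan_poly k) n) / 4 ^ n)
   = poly (catalan_poly k) (-1/4)"
proof -
  have "poly (catalan_poly k) (-1/4) = (\<Sum>n\<le>degree (catalan_poly k). coeff (catalan_poly k) n * (-1/4) ^ n)"
    by (simp add: poly_altdef)
  also have "\<dots> = (\<Sum>n\<le>degree (catalan_poly k). complex_of_real (norm (coeff (catalan_poly k) n) / 4 ^ n))"
  proof (rule sum.cong)
    fix n
    have "(-1 :: complex) ^ n * (-1) ^ n = 1"
      by (metis power_mult_distrib mult_minus1 power_minus1_even power_one minus_minus)
    moreover have "(-1/4 :: complex) ^ n = (-1) ^ n / 4 ^ n"
      by (metis minus_divide_left power_divide)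
    ultimately show "coeff (catalan_poly k) n * (-1/4) ^ n = complex_of_real (norm (coeff (catalan_poly k) n) / 4 ^ n)"
      unfolding norm_coeff by (simp add: coeff_cat)
  qed simp
  finally show ?thesis by simp
qed

lemma val0: "poly (catalan_poly 0) (-1/4) = 1" by simp
lemma val1: "poly (catalan_poly 1) (-1/4) = 1" by simp
lemma valrec: "poly (catalan_poly (Suc (Suc k))) (-1/4) =
   poly (catalan_poly (Suc k)) (-1/4) + poly (catalan_poly k) (-1/4) / 4"
  by simp

lemma valalpha: "k \<ge> 1 \<Longrightarrow> poly (catalan_poly k) (-1/4) = of_nat (alpha_seq k) / 4 ^ (k - 1)"
proof (induction k rule: alpha_seq.induct)
  case 1 then show ?case by simp
next
  case 2 then show ?case by simp
next
  case 3 then show ?case by (simp add: field_simps)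
next
  case (4 k)
  have a: "poly (catalan_poly (Suc (Suc k))) (-1/4) = of_nat (alpha_seq (Suc (Suc k))) / 4 ^ (Suc k)"
    using 4 by simp
  have b: "poly (catalan_poly (Suc k)) (-1/4) = of_nat (alpha_seq (Suc k)) / 4 ^ k"
    using 4 by simp
  show ?case
    by (subst valrec, simp only: a b) (simp add: field_simps)
qed

theorem lemma3p5:
  shows "(\<forall>k. in_l1_w4 (poly_at_delta1 (catalan_poly k)))
    \<and> norm_l1_w4 (poly_at_delta1 (catalan_poly 0)) = 1
    \<and> (\<forall>k\<ge>1. complex_of_real (norm_l1_w4 (poly_at_delta1 (catalan_poly k)))
                 = poly (catalan_poly k) (-1/4)
             \<and> poly (catalan_poly k) (-1/4) = of_nat (alpha_seq k) / 4 ^ (k - 1))"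
proof -
  have n: "complex_of_real (norm_l1_w4 (poly_at_delta1 (catalan_poly k))) = poly (catalan_poly k) (-1/4)" for k
    unfolding norm_l1_w4_def using sums_cat[of k] poly_eq[of k] by (simp add: sums_iff)
  have "complex_of_real (norm_l1_w4 (poly_at_delta1 (catalan_poly 0))) = 1"
    using n[of 0] by simp
  then have z: "norm_l1_w4 (poly_at_delta1 (catalan_poly 0)) = 1"
    using of_real_eq_1_iff by blast
  show ?thesis
    using n z valalpha sums_cat unfolding in_l1_w4_def by (auto simp: sums_iff)
qed

end
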